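(* Let $G$ be a connected graph. The vertex sets of the connected components of the distance-2 graph $G_2$ are independent sets in $G$ if and only if $G$ is bipartite or complete multipartite.
   Context: The distance-2 graph $G_2$ of $G$ has vertex set $V(G)$, two vertices being adjacent iff their distance in $G$ is exactly 2. *)

theory Defs
  imports Main "HOL-Library.Disjoint_Sets"
begin

definition simple_graph :: "'a set \<Rightarrow> ('a \<Rightarrow> 'a \<Rightarrow> bool) \<Rightarrow> bool" where
  "simple_graph V E \<longleftrightarrow> finite V \<and> (\<forall>x y. E x y \<longrightarrow> x \<in> V \<and> y \<in> V)
     \<and> (\<forall>x y. E x y \<longrightarrow> E y x) \<and> (\<forall>x. \<not> E x x)"

definition adj :: "'a set \<Rightarrow> ('a \<Rightarrow> 'a \<Rightarrow> bool) \<Rightarrow> 'a \<Rightarrow> 'a \<Rightarrow> bool" where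
  "adj V E x y \<longleftrightarrow> x \<in> V \<and> y \<in> V \<and> E x y"

definition connected_graph :: "'a set \<Rightarrow> ('a \<Rightarrow> 'a \<Rightarrow> bool) \<Rightarrow> bool" where
  "connected_graph V E \<longleftrightarrow> V \<noteq> {} \<and> (\<forall>x\<in>V. \<forall>y\<in>V. (adj V E)\<^sup>*\<^sup>* x y)"

definition gdist :: "'a set \<Rightarrow> ('a \<Rightarrow> 'a \<Rightarrow> bool) \<Rightarrow> 'a \<Rightarrow> 'a \<Rightarrow> nat" where
  "gdist V E x y = (LEAST n. (adj V E ^^ n) x y)"

definition dist2_adj :: "'a set \<Rightarrow> ('a \<Rightarrow> 'a \<Rightarrow> bool) \<Rightarrow> 'a \<Rightarrow> 'a \<Rightarrow> bool" where
  "dist2_adj V E x y \<longleftrightarrow> x \<in> V \<and> y \<in> V \<and> (\<exists>n. (adj V E ^^ n) x y) \<and> gdist V E x y = 2"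

definition component_sets :: "'a set \<Rightarrow> ('a \<Rightarrow> 'a \<Rightarrow> bool) \<Rightarrow> 'a set set" where
  "component_sets V R = {{y \<in> V. (adj V R)\<^sup>*\<^sup>* x y} | x. x \<in> V}"

definition independent_set :: "('a \<Rightarrow> 'a \<Rightarrow> bool) \<Rightarrow> 'a set \<Rightarrow> bool" where
  "independent_set E S \<longleftrightarrow> (\<forall>x\<in>S. \<forall>y\<in>S. \<not> E x y)"

definition bipartite :: "'a set \<Rightarrow> ('a \<Rightarrow> 'a \<Rightarrow> bool) \<Rightarrow> bool" where
  "bipartite V E \<longleftrightarrow> (\<exists>A B. A \<union> B = V \<and> A \<inter> B = {} \<and> independent_set E A \<and> independent_set E B)"

definition complete_multipartite :: "'a set \<Rightarrow> ('a \<Rightarrow> 'a \<Rightarrow> bool) \<Rightarrow> bool" where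
  "complete_multipartite V E \<longleftrightarrow> (\<exists>P. partition_on V P \<and> (\<forall>S\<in>P. independent_set E S)
     \<and> (\<forall>S\<in>P. \<forall>T\<in>P. S \<noteq> T \<longrightarrow> (\<forall>x\<in>S. \<forall>y\<in>T. E x y)))"

end

theory Submission
  imports Defs
begin

locale gr =
  fixes V :: "'a set" and E :: "'a \<Rightarrow> 'a \<Rightarrow> bool"
  assumes sg: "simple_graph V E" and cg: "connected_graph V E"
begin

abbreviation "R \<equiv> adj V E"
abbreviation "D \<equiv> gdist V E"

lemma R_sym: "R x y \<Longrightarrow> R y x"
  using sg by (auto simp: adj_def simple_graph_def)

lemma R_E: "R x y \<longleftrightarrow> E x y"
  using sg by (auto simp: adj_def simple_graph_def)

lemma pow_sym: "(R ^^ n) x y \<Longrightarrow> (R ^^ n) y x"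
proof (induction n arbitrary: y)
  case 0 then show ?case by simp
next
  case (Suc n)
  then obtain z where "(R ^^ n) x z" "R z y" by auto
  then have "(R ^^ n) z x" using Suc.IH by blast
  have "(R ^^ (1 + n)) y x" unfolding relpowp_add using \<open>R z y\<close> R_sym \<open>(R ^^ n) z x\<close>
    by auto
  then show ?case by simp
qed

lemma reach: "x \<in> V \<Longrightarrow> y \<in> V \<Longrightarrow> \<exists>n. (R ^^ n) x y"
  using cg by (auto simp: connected_graph_def rtranclp_power)

lemma D_walk: "x \<in> V \<Longrightarrow> y \<in> V \<Longrightarrow> (R ^^ D x y) x y"
  unfolding gdist_def using reach by (meson LeastI_ex)

lemma D_le: "(R ^^ n) x y \<Longrightarrow> D x y \<le> n"
  unfolding gdist_def by (rule Least_le)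

lemma D_sym: "x \<in> V \<Longrightarrow> y \<in> V \<Longrightarrow> D x y = D y x"
  by (meson D_le D_walk antisym pow_sym)

lemma D_0: "x \<in> V \<Longrightarrow> y \<in> V \<Longrightarrow> D x y = 0 \<longleftrightarrow> x = y"
proof
  assume "x \<in> V" "y \<in> V" "D x y = 0"
  then show "x = y" using D_walk[of x y] by simp
next
  assume "x = y" then show "D x y = 0" using D_le[of 0 x y] by simp
qed

lemma D_1: "x \<in> V \<Longrightarrow> y \<in> V \<Longrightarrow> D x y = 1 \<longleftrightarrow> E x y"
proof
  assume a: "x \<in> V" "y \<in> V" "D x y = 1"
  then show "E x y" using D_walk[of x y] R_E by auto
next
  assume a: "x \<in> V" "y \<in> V" "E x y"
  then have "D x y \<le> 1" using D_le[of 1 x y] R_E by auto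
  moreover have "x \<noteq> y" using a sg by (auto simp: simple_graph_def)
  ultimately show "D x y = 1" using D_0 a by fastforce
qed

lemma walk_V: "(R ^^ n) x y \<Longrightarrow> n > 0 \<Longrightarrow> x \<in> V \<and> y \<in> V"
proof (induction n arbitrary: y)
  case 0 then show ?case by simp
next
  case (Suc n)
  then obtain z where "(R ^^ n) x z" "R z y" by auto
  then have zy: "z \<in> V" "y \<in> V" by (auto simp: adj_def)
  show ?case
  proof (cases n)
    case 0 then show ?thesis using \<open>(R ^^ n) x z\<close> zy by simp
  next
    case (Suc m) then show ?thesis using Suc.IH \<open>(R ^^ n) x z\<close> zy by blast
  qed
qed

lemma D_tri: "x \<in> V \<Longrightarrow> y \<in> V \<Longrightarrow> z \<in> V \<Longrightarrow> D x z \<le> D x y + D y z"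
proof -
  assume a: "x \<in> V" "y \<in> V" "z \<in> V"
  have "(R ^^ (D x y + D y z)) x z" unfolding relpowp_add
    using D_walk a by blast
  then show ?thesis by (rule D_le)
qed

lemma D_split:
  assumes "x \<in> V" "y \<in> V" "D x y = k" "j \<le> k"
  shows "\<exists>z\<in>V. D x z = j \<and> D z y = k - j"
proof -
  have "(R ^^ k) x y" using D_walk[OF assms(1,2)] assms(3) by simp
  then have "(R ^^ (j + (k - j))) x y" using assms(4) by simp
  then obtain z where z1: "(R ^^ j) x z" and z2: "(R ^^ (k-j)) z y"
    unfolding relpowp_add by auto
  have zV: "z \<in> V"
  proof (cases "j = 0")
    case True then show ?thesis using z1 assms by simp
  next
    case False then show ?thesis using walk_V[OF z1] by simp
  qed
  have "D x z \<le> j" "D z y \<le> k - j" using z1 z2 D_le by auto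
  moreover have "k \<le> D x z + D z y" using D_tri[OF assms(1) zV assms(2)] assms by simp
  ultimately show ?thesis using zV assms by force
qed

lemma d2_iff: "dist2_adj V E x y \<longleftrightarrow> x \<in> V \<and> y \<in> V \<and> D x y = 2"
  unfolding dist2_adj_def using reach by blast

abbreviation "S \<equiv> (adj V (dist2_adj V E))\<^sup>*\<^sup>*"

lemma adj2: "adj V (dist2_adj V E) x y \<longleftrightarrow> x \<in> V \<and> y \<in> V \<and> D x y = 2"
  unfolding adj_def d2_iff by blast

lemma S_sym: "S x y \<Longrightarrow> S y x"
proof (induction rule: rtranclp_induct)
  case base then show ?case by simp
next
  case (step y z)
  then have "adj V (dist2_adj V E) z y" using adj2 D_sym by auto
  then show ?case using step by (meson converse_rtranclp_into_rtranclp)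
qed

lemma S_V: "S x y \<Longrightarrow> x \<in> V \<Longrightarrow> y \<in> V"
  by (induction rule: rtranclp_induct) (auto simp: adj2)

lemma even_S: "x \<in> V \<Longrightarrow> y \<in> V \<Longrightarrow> D x y = 2 * n \<Longrightarrow> S x y"
proof (induction n arbitrary: x)
  case 0 then show ?case using D_0 by simp
next
  case (Suc n)
  then obtain z where z: "z \<in> V" "D x z = 2" "D z y = 2 * n"
    using D_split[of x y "2 * Suc n" 2] by auto
  then have "S z y" using Suc by blast
  moreover have "adj V (dist2_adj V E) x z" using z Suc adj2 by simp
  ultimately show ?case by (meson converse_rtranclp_into_rtranclp)
qed

definition IND where
  "IND \<longleftrightarrow> (\<forall>x\<in>V. \<forall>y z. S x y \<longrightarrow> S x z \<longrightarrow> \<not> E y z)"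

lemma IND_iff: "(\<forall>C\<in>component_sets V (dist2_adj V E). independent_set E C) \<longleftrightarrow> IND"
proof
  assume H: "\<forall>C\<in>component_sets V (dist2_adj V E). independent_set E C"
  show IND unfolding IND_def
  proof (intro ballI allI impI)
    fix x y z assume a: "x \<in> V" "S x y" "S x z"
    have "{w\<in>V. S x w} \<in> component_sets V (dist2_adj V E)"
      unfolding component_sets_def using a(1) by blast
    then have "independent_set E {w\<in>V. S x w}" using H by blast
    moreover have "y \<in> {w\<in>V. S x w}" "z \<in> {w\<in>V. S x w}" using a S_V by auto
    ultimately show "\<not> E y z" unfolding independent_set_def by blast
  qed
next
  assume H: IND
  show "\<forall>C\<in>component_sets V (dist2_adj V E). independent_set E C"
  proof
    fix C assume "C \<in> component_sets V (dist2_adj V E)"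
    then obtain x where x: "x \<in> V" "C = {w\<in>V. S x w}" unfolding component_sets_def by blast
    show "independent_set E C" unfolding independent_set_def x(2)
    proof (intro ballI)
      fix y z assume "y \<in> {w\<in>V. S x w}" "z \<in> {w\<in>V. S x w}"
      then have "S x y" "S x z" by auto
      then show "\<not> E y z" using H x(1) unfolding IND_def by blast
    qed
  qed
qed

lemma S_iff:
  assumes "IND" "x \<in> V" "y \<in> V"
  shows "S x y \<longleftrightarrow> even (D x y)"
proof
  assume "even (D x y)"
  then obtain n where "D x y = 2 * n" by (auto elim!: evenE)
  then show "S x y" using even_S assms by blast
next
  assume s: "S x y"
  show "even (D x y)"
  proof (rule ccontr)
    assume "odd (D x y)"
    define k where "k = D x y - 1"
    have k: "D x y = Suc k" "even k" using \<open>odd (D x y)\<close> unfolding k_def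
      by (cases "D x y"; simp)+
    then obtain z where z: "z \<in> V" "D x z = k" "D z y = 1"
      using D_split[of x y "Suc k" k] assms by auto
    obtain n where "k = 2 * n" using k(2) by (auto elim!: evenE)
    then have "S x z" using even_S assms z by blast
    moreover have "E z y" using z D_1 assms by simp
    ultimately show False using s assms unfolding IND_def by blast
  qed
qed

lemma generic:
  assumes refl: "\<And>x. x \<in> V \<Longrightarrow> Q x x"
    and sym: "\<And>x y. Q x y \<Longrightarrow> Q y x"
    and trans: "\<And>x y z. Q x y \<Longrightarrow> Q y z \<Longrightarrow> Q x z"
    and d2: "\<And>x y. x \<in> V \<Longrightarrow> y \<in> V \<Longrightarrow> D x y = 2 \<Longrightarrow> Q x y"
    and ne: "\<And>x y. Q x y \<Longrightarrow> x \<in> V \<Longrightarrow> y \<in> V \<Longrightarrow> \<not> E x y"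
  shows IND
proof -
  have *: "S x y \<Longrightarrow> x \<in> V \<Longrightarrow> Q x y" for x y
  proof (induction rule: rtranclp_induct)
    case base then show ?case using refl by simp
  next
    case (step y z) then show ?case using adj2 d2 trans by blast
  qed
  show ?thesis unfolding IND_def
  proof (intro ballI allI impI)
    fix x y z assume a: "x \<in> V" "S x y" "S x z"
    have "Q x y" "Q x z" using * a by auto
    then have "Q y z" using sym trans by blast
    moreover have "y \<in> V" "z \<in> V" using a S_V by auto
    ultimately show "\<not> E y z" using ne by blast
  qed
qed

lemma bip_IND: "bipartite V E \<Longrightarrow> IND"
proof -
  assume "bipartite V E"
  then obtain A B where AB: "A \<union> B = V" "A \<inter> B = {}" "independent_set E A" "independent_set E B"
    unfolding bipartite_def by blast
  show IND
  proof (rule generic[where Q="\<lambda>x y. x \<in> A \<longleftrightarrow> y \<in> A"])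
    fix x y assume a: "x \<in> V" "y \<in> V" "D x y = 2"
    then obtain z where z: "z \<in> V" "D x z = 1" "D z y = 1" using D_split[of x y 2 1] by auto
    then have "E x z" "E z y" using D_1 a by auto
    then show "x \<in> A \<longleftrightarrow> y \<in> A" using AB a z unfolding independent_set_def by blast
  next
    fix x y assume "x \<in> A \<longleftrightarrow> y \<in> A" "x \<in> V" "y \<in> V"
    then show "\<not> E x y" using AB unfolding independent_set_def by blast
  qed auto
qed

lemma cm_IND: "complete_multipartite V E \<Longrightarrow> IND"
proof -
  assume "complete_multipartite V E"
  then obtain P where P: "partition_on V P" "\<forall>S\<in>P. independent_set E S"
     "\<forall>S\<in>P. \<forall>T\<in>P. S \<noteq> T \<longrightarrow> (\<forall>x\<in>S. \<forall>y\<in>T. E x y)"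
    unfolding complete_multipartite_def by blast
  have U: "\<Union>P = V" and dj: "\<And>p q. p \<in> P \<Longrightarrow> q \<in> P \<Longrightarrow> p \<noteq> q \<Longrightarrow> p \<inter> q = {}"
    using P(1) unfolding partition_on_def disjoint_def by auto
  show IND
  proof (rule generic[where Q="\<lambda>x y. \<exists>T\<in>P. x \<in> T \<and> y \<in> T"])
    fix x y z assume "\<exists>T\<in>P. x \<in> T \<and> y \<in> T" "\<exists>T\<in>P. y \<in> T \<and> z \<in> T"
    then show "\<exists>T\<in>P. x \<in> T \<and> z \<in> T" using dj by blast
  next
    fix x y assume a: "x \<in> V" "y \<in> V" "D x y = 2"
    then have "D x y \<noteq> 1" "D x y \<noteq> 0" by auto
    then have "\<not> E x y" "x \<noteq> y" using D_1[OF a(1,2)] D_0[OF a(1,2)] by auto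
    then show "\<exists>T\<in>P. x \<in> T \<and> y \<in> T" using U a P(3) by blast
  next
    fix x y assume "\<exists>T\<in>P. x \<in> T \<and> y \<in> T"
    then show "\<not> E x y" using P(2) unfolding independent_set_def by blast
  qed (use U in auto)
qed

lemma S_trans: "S x y \<Longrightarrow> S y z \<Longrightarrow> S x z"
  by (rule rtranclp_trans)

lemma cls: "S x y \<Longrightarrow> {w\<in>V. S x w} = {w\<in>V. S y w}"
  using S_sym S_trans by blast

lemma fwd_cm:
  assumes "IND" and d: "\<forall>x\<in>V. \<forall>y\<in>V. D x y \<le> 2"
  shows "complete_multipartite V E"
proof -
  define P where "P = {{y\<in>V. S x y} | x. x \<in> V}"
  have "partition_on V P"
  proof (rule partition_onI)
    show "\<Union>P = V" unfolding P_def by auto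
  next
    fix p q assume "p \<in> P" "q \<in> P" "p \<noteq> q"
    then show "disjnt p q" unfolding P_def disjnt_def
      using cls S_sym S_trans by blast
  next
    show "{} \<notin> P" unfolding P_def by auto
  qed
  moreover have "\<forall>T\<in>P. independent_set E T"
    using assms(1) unfolding P_def IND_def independent_set_def by blast
  moreover have "\<forall>T\<in>P. \<forall>U\<in>P. T \<noteq> U \<longrightarrow> (\<forall>x\<in>T. \<forall>y\<in>U. E x y)"
  proof (intro ballI impI)
    fix T U x y assume a: "T \<in> P" "U \<in> P" "T \<noteq> U" "x \<in> T" "y \<in> U"
    then obtain u w where u: "u \<in> V" "T = {y\<in>V. S u y}" and w: "w \<in> V" "U = {y\<in>V. S w y}"
      unfolding P_def by blast
    have xy: "x \<in> V" "y \<in> V" "S u x" "S w y" using a u w by auto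
    have nS: "\<not> S x y"
    proof
      assume "S x y"
      then have "S u y" using xy S_trans by blast
      then have "S w u" using xy S_sym S_trans by blast
      then show False using cls u w a by metis
    qed
    then have "x \<noteq> y" by auto
    then have "D x y \<noteq> 0" using D_0 xy by simp
    moreover have "D x y \<noteq> 2"
    proof
      assume "D x y = 2"
      then have "adj V (dist2_adj V E) x y" using adj2 xy by simp
      then show False using nS by blast
    qed
    ultimately have "D x y = 1" using d xy by fastforce
    then show "E x y" using D_1 xy by simp
  qed
  ultimately show ?thesis unfolding complete_multipartite_def by blast
qed

lemma fwd_bip:
  assumes ind: "IND" and ab: "a \<in> V" "b0 \<in> V" "D a b0 > 2"
  shows "bipartite V E"
proof -
  obtain b where b: "b \<in> V" "D a b = 3" using D_split[OF ab(1,2) refl, of 3] ab by auto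
  obtain p where p: "p \<in> V" "D a p = 1" "D p b = 2" using D_split[OF ab(1) b(1) b(2), of 1] by auto
  obtain q where q: "q \<in> V" "D p q = 1" "D q b = 1" using D_split[OF p(1) b(1) p(3), of 1] by auto
  have "D a q \<le> 2" using D_tri[OF ab(1) p(1) q(1)] p q by simp
  moreover have "3 \<le> D a q + 1" using D_tri[OF ab(1) q(1) b(1)] b q by simp
  ultimately have aq: "D a q = 2" by simp
  have Sx: "x \<in> V \<Longrightarrow> y \<in> V \<Longrightarrow> S x y \<longleftrightarrow> even (D x y)" for x y using S_iff ind by blast
  have Saq: "S a q" using Sx aq ab q by simp
  have Spb: "S p b" using Sx p b by simp
  have key: "\<And>x. x \<in> V \<Longrightarrow> D a x = k \<Longrightarrow> odd k \<Longrightarrow> even (D p x)" for k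
  proof (induction k rule: less_induct)
    case (less k)
    note IH = less(1) and xV = less(2) and Dk = less(3) and ok = less(4)
    show ?case
    proof (rule ccontr)
      assume op: "odd (D p x)"
      have nSa: "\<not> S a x" using Sx xV Dk ok ab by simp
      have nSp: "\<not> S p x" using Sx xV Dk ok p op by simp
      have nSq: "\<not> S q x" using nSa Saq S_trans by blast
      have nSb: "\<not> S b x" using nSp Spb S_trans by blast
      have oq: "odd (D q x)" using nSq Sx q xV Dk ok by simp
      have ob: "odd (D b x)" using nSb Sx b xV Dk ok by simp
      show False
      proof (cases "k = 1")
        case True
        have "D p x \<le> 2" using D_tri[OF p(1) ab(1) xV] D_sym[OF ab(1) p(1)] p xV Dk ok True by simp
        then have px: "D p x = 1" using op by (cases "D p x"; simp; presburger)
        have "D q x \<le> 2" using D_tri[OF q(1) p(1) xV] D_sym[OF p(1) q(1)] q px by simp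
        then have qx: "D q x = 1" using oq by (cases "D q x"; simp; presburger)
        have "D b x \<le> 2" using D_tri[OF b(1) q(1) xV] D_sym[OF q(1) b(1)] q qx by simp
        then have bx: "D b x = 1" using ob by (cases "D b x"; simp; presburger)
        have "D a b \<le> 2" using D_tri[OF ab(1) xV b(1)] D_sym[OF b(1) xV] bx xV Dk ok True by simp
        then show False using b by simp
      next
        case False
        then have k3: "k \<ge> 3" using ok by (cases k; simp; presburger)
        have "D x a = k" using D_sym xV Dk ok ab by simp
        then obtain z where z: "z \<in> V" "D x z = 2" "D z a = k - 2"
          using D_split[OF xV ab(1), of k 2] k3 by auto
        have "S x z" using Sx z xV Dk ok by simp
        then have "\<not> S p z" using nSp S_sym S_trans by blast
        then have "odd (D p z)" using Sx z p by simp
        moreover have "D a z = k - 2" using D_sym z ab by simp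
        moreover have "odd (k - 2)" using k3 ok by simp
        ultimately show False using IH[of "k - 2" z] k3 z by simp
      qed
    qed
  qed
  define A where "A = {x\<in>V. even (D a x)}"
  define B where "B = {x\<in>V. odd (D a x)}"
  have "independent_set E A"
    unfolding independent_set_def A_def using ind Sx ab unfolding IND_def by blast
  moreover have "independent_set E B"
  proof -
    have "\<forall>x\<in>B. S p x" unfolding B_def using key Sx p by blast
    then show ?thesis unfolding independent_set_def using ind p unfolding IND_def by blast
  qed
  moreover have "A \<union> B = V" "A \<inter> B = {}" unfolding A_def B_def by auto
  ultimately show ?thesis unfolding bipartite_def by blast
qed

end

theorem lemma4p9:
  fixes V :: "'a set" and E :: "'a \<Rightarrow> 'a \<Rightarrow> bool"
  assumes "simple_graph V E" and "connected_graph V E"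
  shows "(\<forall>C\<in>component_sets V (dist2_adj V E). independent_set E C)
         \<longleftrightarrow> bipartite V E \<or> complete_multipartite V E"
proof -
  interpret gr V E using assms by unfold_locales
  show ?thesis unfolding IND_iff
  proof
    assume ind: IND
    show "bipartite V E \<or> complete_multipartite V E"
    proof (cases "\<forall>x\<in>V. \<forall>y\<in>V. D x y \<le> 2")
      case True then show ?thesis using fwd_cm ind by blast
    next
      case False
      then obtain a b where "a \<in> V" "b \<in> V" "D a b > 2" by force
      then show ?thesis using fwd_bip ind by blast
    qed
  next
    assume "bipartite V E \<or> complete_multipartite V E"
    then show IND using bip_IND cm_IND by blast
  qed
qed

end
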